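(* Let $(q(\ell))_{\ell\in\mathbb{Z}}\subset\mathbb{C}$ and $(p(\ell,z))_{(\ell,z)\in\mathbb{Z}^2}\subset\mathbb{C}$ satisfy $q(\ell)=0$ for all $\ell<0$ and $p(\ell,z)=0$ for all $\ell\in\mathbb{Z}$, $z<0$. Define the iterates $q(\ell,0):=\ddot r(\ell)$ and $q(\ell,m):=\ddot r(\ell)+\sum_{z\in\mathbb{Z}}q(\ell-z,m-1)\ddot p_+(\ell,z)$ for $(\ell,m)\in\mathbb{Z}\times\mathbb{N}$. Then for each $(\ell,m)\in\mathbb{Z}\times\mathbb{N}_0$, $$q(\ell,m)=\sum_{z\in\mathbb{Z}}\ddot r(\ell-z)\,\alpha\{\ddot p_+\}(\ell,z,m).$$
   Context: $r(\ell):=\sum_{z\in\mathbb{Z}}q(\ell-z)p(\ell,z)$. $L_0:=\sup\{L\in\mathbb{N}_0:p(\ell,0)\neq0\text{ for all }0\le\ell<L\}\in\mathbb{N}_0\cup\{\infty\}$, assumed $\ge1$; $\mathbb{L}:=\{\ell\in\mathbb{Z}:0\le\ell<L_0\}$. $\ddot r(\ell):=\frac{r(\ell)}{p(\ell,0)}\mathbf 1_{\mathbb{L}}(\ell)$, $\ddot p_+(\ell,z):=\big(\delta_{z,0}-\frac{p(\ell,z)}{p(\ell,0)}\big)\mathbf 1_{\mathbb{L}}(\ell)$ ($\delta_{z,0}=1$ if $z=0$, else $0$). Convolution powers: $\ddot p_+^{*0}(\ell,z):=\delta_{z,0}$, $\ddot p_+^{*j}(\ell,z):=\sum_{z_1\in\mathbb{Z}}\ddot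 p_+(\ell,z_1)\ddot p_+^{*(j-1)}(\ell-z_1,z-z_1)$ for $j\ge1$. $\alpha\{\ddot p_+\}(\ell,z,x):=\sum_{j=0}^{\lfloor x\rfloor}\ddot p_+^{*j}(\ell,z)$ for $(\ell,z,x)\in\mathbb{Z}^2\times\mathbb{R}$. *)

theory Defs
  imports "HOL-Analysis.Analysis" "HOL-Library.Extended_Nat"
begin

definition rr :: "(int \<Rightarrow> complex) \<Rightarrow> (int \<Rightarrow> int \<Rightarrow> complex) \<Rightarrow> int \<Rightarrow> complex" where
  "rr q p l = (\<Sum>\<^sub>\<infinity>z\<in>(UNIV::int set). q (l - z) * p l z)"

definition L0 :: "(int \<Rightarrow> int \<Rightarrow> complex) \<Rightarrow> enat" where
  "L0 p = Sup {enat L | L::nat. \<forall>l::nat. l < L \<longrightarrow> p (int l) 0 \<noteq> 0}"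

definition LL :: "(int \<Rightarrow> int \<Rightarrow> complex) \<Rightarrow> int set" where
  "LL p = {l::int. 0 \<le> l \<and> enat (nat l) < L0 p}"

definition rdd :: "(int \<Rightarrow> complex) \<Rightarrow> (int \<Rightarrow> int \<Rightarrow> complex) \<Rightarrow> int \<Rightarrow> complex" where
  "rdd q p l = (if l \<in> LL p then rr q p l / p l 0 else 0)"

definition pdd :: "(int \<Rightarrow> int \<Rightarrow> complex) \<Rightarrow> int \<Rightarrow> int \<Rightarrow> complex" where
  "pdd p l z = (if l \<in> LL p then (if z = 0 then 1 else 0) - p l z / p l 0 else 0)"

primrec pconv :: "(int \<Rightarrow> int \<Rightarrow> complex) \<Rightarrow> nat \<Rightarrow> int \<Rightarrow> int \<Rightarrow> complex" where
  "pconv p 0 l z = (if z = 0 then 1 else 0)"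
| "pconv p (Suc j) l z = (\<Sum>\<^sub>\<infinity>z1\<in>(UNIV::int set). pdd p l z1 * pconv p j (l - z1) (z - z1))"

definition alpha :: "(int \<Rightarrow> int \<Rightarrow> complex) \<Rightarrow> int \<Rightarrow> int \<Rightarrow> real \<Rightarrow> complex" where
  "alpha p l z x = (\<Sum>j\<in>{0..\<lfloor>x\<rfloor>}. pconv p (nat j) l z)"

primrec qit :: "(int \<Rightarrow> complex) \<Rightarrow> (int \<Rightarrow> int \<Rightarrow> complex) \<Rightarrow> nat \<Rightarrow> int \<Rightarrow> complex" where
  "qit q p 0 l = rdd q p l"
| "qit q p (Suc m) l = rdd q p l + (\<Sum>\<^sub>\<infinity>z\<in>(UNIV::int set). qit q p m (l - z) * pdd p l z)"

end

theory Submission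
  imports Defs
begin

lemma infsum_fin:
  fixes f :: "int \<Rightarrow> complex"
  assumes "finite A" "\<And>z. z \<notin> A \<Longrightarrow> f z = 0"
  shows "infsum f UNIV = sum f A"
proof -
  have "infsum f UNIV = infsum f A"
    by (rule infsum_cong_neutral) (use assms in auto)
  then show ?thesis using assms(1) by simp
qed

lemma sum_supp:
  fixes f :: "int \<Rightarrow> complex"
  assumes "finite A" "finite B" "\<And>z. f z \<noteq> 0 \<Longrightarrow> z \<in> A \<and> z \<in> B"
  shows "sum f A = sum f B"
  using infsum_fin[of A f] infsum_fin[of B f] assms by metis

lemma infsum_shift:
  fixes g :: "int \<Rightarrow> complex"
  shows "infsum (\<lambda>z. g (z - c)) UNIV = infsum g UNIV"
proof -
  have "bij_betw (\<lambda>z. z - c) UNIV UNIV"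
    by (rule bij_betwI[where g="\<lambda>w. w + c"]) auto
  then show ?thesis by (rule infsum_reindex_bij_betw)
qed

definition AA :: "(int \<Rightarrow> int \<Rightarrow> complex) \<Rightarrow> int \<Rightarrow> int \<Rightarrow> nat \<Rightarrow> complex" where
  "AA p l z m = (\<Sum>j<Suc m. pconv p j l z)"

lemma alpha_AA: "alpha p l z (real m) = AA p l z m"
proof -
  have "alpha p l z (real m) = (\<Sum>j\<in>{0..int m}. pconv p (nat j) l z)"
    by (simp add: alpha_def)
  also have "\<dots> = (\<Sum>j\<in>int ` {..<Suc m}. pconv p (nat j) l z)"
  proof -
    have "{0..int m} = int ` {..<Suc m}"
      by (auto simp: image_iff intro!: bexI[where x="nat _"])
    then show ?thesis by simp
  qed
  also have "\<dots> = AA p l z m"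
    by (subst sum.reindex) (auto simp: AA_def)
  finally show ?thesis .
qed

context
  fixes q :: "int \<Rightarrow> complex" and p :: "int \<Rightarrow> int \<Rightarrow> complex"
  assumes q0: "\<And>l. l < 0 \<Longrightarrow> q l = 0"
    and p0: "\<And>l z. z < 0 \<Longrightarrow> p l z = 0"
begin

lemma S1: "rdd q p l \<noteq> 0 \<Longrightarrow> 0 \<le> l"
  by (auto simp: rdd_def LL_def split: if_splits)

lemma S2: "pdd p l z \<noteq> 0 \<Longrightarrow> 0 \<le> z \<and> 0 \<le> l"
  by (cases "z < 0") (auto simp: pdd_def LL_def p0 split: if_splits)

lemma S3: "pconv p j l z \<noteq> 0 \<Longrightarrow> 0 \<le> z"
proof (induction j arbitrary: l z)
  case 0 then show ?case by (auto split: if_splits)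
next
  case (Suc j)
  show ?case
  proof (rule ccontr)
    assume "\<not> 0 \<le> z"
    then have "\<And>z1. pdd p l z1 * pconv p j (l - z1) (z - z1) = 0"
      using S2 Suc.IH by (metis linorder_not_le mult_eq_0_iff diff_ge_0_iff_ge order_trans)
    then have "(\<Sum>\<^sub>\<infinity>z1\<in>(UNIV::int set). pdd p l z1 * pconv p j (l - z1) (z - z1)) = 0"
      by (intro infsum_0) 
    then show False using Suc.prems by simp
  qed
qed

lemma S5: "AA p l z m \<noteq> 0 \<Longrightarrow> 0 \<le> z"
  unfolding AA_def using S3 by (metis (no_types, lifting) sum.neutral)

lemma S4: "qit q p m l \<noteq> 0 \<Longrightarrow> 0 \<le> l"
proof (induction m arbitrary: l)
  case 0 then show ?case using S1 by simp
next
  case (Suc m)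
  show ?case
  proof (rule ccontr)
    assume "\<not> 0 \<le> l"
    then have "\<And>z. qit q p m (l - z) * pdd p l z = 0" using S2 by (metis mult_eq_0_iff)
    moreover have "rdd q p l = 0" using S1 \<open>\<not> 0 \<le> l\<close> by blast
    moreover have "(\<Sum>\<^sub>\<infinity>z\<in>(UNIV::int set). qit q p m (l - z) * pdd p l z) = 0"
      using calculation(1) by (intro infsum_0)
    ultimately show False using Suc.prems by simp
  qed
qed

lemma R1: "z \<le> N \<Longrightarrow> pconv p (Suc j) l z = (\<Sum>z1\<in>{0..N}. pdd p l z1 * pconv p j (l - z1) (z - z1))"
  apply simp
  apply (rule infsum_fin)
   apply simp
  using S2 S3 by (metis atLeastAtMost_iff diff_ge_0_iff_ge mult_eq_0_iff order_trans)

lemma R2: "l \<le> N \<Longrightarrow> qit q p (Suc m) l = rdd q p l + (\<Sum>z\<in>{0..N}. qit q p m (l - z) * pdd p l z)"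
  apply simp
  apply (rule infsum_fin)
   apply simp
  using S2 S4 by (metis atLeastAtMost_iff diff_ge_0_iff_ge mult_eq_0_iff order_trans)

lemma R3: "l \<le> N \<Longrightarrow> (\<Sum>\<^sub>\<infinity>z\<in>(UNIV::int set). rdd q p (l - z) * alpha p l z (real m))
   = (\<Sum>z\<in>{0..N}. rdd q p (l - z) * AA p l z m)"
  unfolding alpha_AA
  apply (rule infsum_fin)
   apply simp
  using S1 S5 by (metis atLeastAtMost_iff diff_ge_0_iff_ge mult_eq_0_iff order_trans)

lemma AA_Suc: "z \<le> N \<Longrightarrow> AA p l z (Suc m) = (if z = 0 then 1 else 0)
   + (\<Sum>z1\<in>{0..N}. pdd p l z1 * AA p (l - z1) (z - z1) m)"
proof -
  assume zN: "z \<le> N"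
  have "AA p l z (Suc m) = pconv p 0 l z + (\<Sum>j<Suc m. pconv p (Suc j) l z)"
    unfolding AA_def by (rule sum.lessThan_Suc_shift)
  also have "(\<Sum>j<Suc m. pconv p (Suc j) l z)
     = (\<Sum>j<Suc m. \<Sum>z1\<in>{0..N}. pdd p l z1 * pconv p j (l - z1) (z - z1))"
    using R1[OF zN] by simp
  also have "\<dots> = (\<Sum>z1\<in>{0..N}. pdd p l z1 * AA p (l - z1) (z - z1) m)"
    unfolding AA_def by (subst sum.swap) (simp only: sum_distrib_left)
  finally show ?thesis by simp
qed

lemma rdd_neg: "l < 0 \<Longrightarrow> rdd q p l = 0"
  using S1 by force

lemma main: "\<forall>l N. l \<le> N \<longrightarrow> qit q p m l = (\<Sum>z\<in>{0..N}. rdd q p (l - z) * AA p l z m)"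
proof (induction m)
  case 0
  show ?case
  proof (intro allI impI)
    fix l N :: int assume lN: "l \<le> N"
    show "qit q p 0 l = (\<Sum>z\<in>{0..N}. rdd q p (l - z) * AA p l z 0)"
    proof (cases "0 \<le> l")
      case True
      have "(\<Sum>z\<in>{0..N}. rdd q p (l - z) * AA p l z 0) = (\<Sum>z\<in>{0..N}. if z = 0 then rdd q p l else 0)"
        by (rule sum.cong) (auto simp: AA_def)
      also have "\<dots> = rdd q p l" using True lN by (simp add: sum.delta)
      finally show ?thesis by simp
    next
      case False
      have "(\<Sum>z\<in>{0..N}. rdd q p (l - z) * AA p l z 0) = 0"
      proof (rule sum.neutral, rule ballI)
        fix z assume "z \<in> {0..N}"
        then have "l - z < 0" using False by auto
        then show "rdd q p (l - z) * AA p l z 0 = 0" using rdd_neg by simp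
      qed
      then show ?thesis using False rdd_neg by simp
    qed
  qed
next
  case (Suc m)
  show ?case
  proof (intro allI impI)
    fix l N :: int assume lN: "l \<le> N"
    show "qit q p (Suc m) l = (\<Sum>z\<in>{0..N}. rdd q p (l - z) * AA p l z (Suc m))"
    proof (cases "0 \<le> l")
      case False
      have "qit q p (Suc m) l = 0" using S4[of "Suc m" l] False by blast
      moreover have "(\<Sum>z\<in>{0..N}. rdd q p (l - z) * AA p l z (Suc m)) = 0"
      proof (rule sum.neutral, rule ballI)
        fix z assume "z \<in> {0..N}"
        then have "l - z < 0" using False by auto
        then show "rdd q p (l - z) * AA p l z (Suc m) = 0" using rdd_neg by simp
      qed
      ultimately show ?thesis by simp
    next
      case True
      define g where "g z1 w = rdd q p (l - z1 - w) * AA p (l - z1) w m" for z1 w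
      have "qit q p (Suc m) l = rdd q p l + (\<Sum>z1\<in>{0..N}. qit q p m (l - z1) * pdd p l z1)"
        by (rule R2[OF lN])
      also have "(\<Sum>z1\<in>{0..N}. qit q p m (l - z1) * pdd p l z1) = (\<Sum>z1\<in>{0..N}. pdd p l z1 * (\<Sum>w\<in>{0..N}. g z1 w))"
      proof (rule sum.cong[OF refl])
        fix z1 assume "z1 \<in> {0..N}"
        then have "l - z1 \<le> N" using lN by auto
        then have "qit q p m (l - z1) = (\<Sum>w\<in>{0..N}. g z1 w)"
          using Suc.IH unfolding g_def by simp
        then show "qit q p m (l - z1) * pdd p l z1 = pdd p l z1 * (\<Sum>w\<in>{0..N}. g z1 w)"
          by (simp add: mult.commute)
      qed
      finally have L: "qit q p (Suc m) l = rdd q p l + (\<Sum>z1\<in>{0..N}. pdd p l z1 * (\<Sum>w\<in>{0..N}. g z1 w))" .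
      have "(\<Sum>z\<in>{0..N}. rdd q p (l - z) * AA p l z (Suc m))
         = (\<Sum>z\<in>{0..N}. rdd q p (l - z) * (if z = 0 then 1 else 0)
             + (\<Sum>z1\<in>{0..N}. pdd p l z1 * (rdd q p (l - z) * AA p (l - z1) (z - z1) m)))"
      proof (rule sum.cong[OF refl])
        fix z assume "z \<in> {0..N}"
        then have "z \<le> N" by simp
        show "rdd q p (l - z) * AA p l z (Suc m) = rdd q p (l - z) * (if z = 0 then 1 else 0)
             + (\<Sum>z1\<in>{0..N}. pdd p l z1 * (rdd q p (l - z) * AA p (l - z1) (z - z1) m))"
          unfolding AA_Suc[OF \<open>z \<le> N\<close>] distrib_left sum_distrib_left
          by (simp add: mult.left_commute)
      qed
      also have "\<dots> = (\<Sum>z\<in>{0..N}. rdd q p (l - z) * (if z = 0 then 1 else 0))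
          + (\<Sum>z\<in>{0..N}. \<Sum>z1\<in>{0..N}. pdd p l z1 * (rdd q p (l - z) * AA p (l - z1) (z - z1) m))"
        by (rule sum.distrib)
      also have "(\<Sum>z\<in>{0..N}. rdd q p (l - z) * (if z = 0 then 1 else 0)) = rdd q p l"
        using True lN by (simp add: sum.delta if_distrib cong: if_cong)
      also have "(\<Sum>z\<in>{0..N}. \<Sum>z1\<in>{0..N}. pdd p l z1 * (rdd q p (l - z) * AA p (l - z1) (z - z1) m))
            = (\<Sum>z1\<in>{0..N}. pdd p l z1 * (\<Sum>z\<in>{0..N}. g z1 (z - z1)))"
        by (subst sum.swap) (simp add: g_def sum_distrib_left)
      also have "(\<Sum>z1\<in>{0..N}. pdd p l z1 * (\<Sum>z\<in>{0..N}. g z1 (z - z1)))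
           = (\<Sum>z1\<in>{0..N}. pdd p l z1 * (\<Sum>w\<in>{0..N}. g z1 w))"
      proof (rule sum.cong[OF refl])
        fix z1 assume z1: "z1 \<in> {0..N}"
        have sg: "0 \<le> w \<and> w \<le> l - z1" if "g z1 w \<noteq> 0" for w
        proof -
          have "rdd q p (l - z1 - w) \<noteq> 0" "AA p (l - z1) w m \<noteq> 0" using that unfolding g_def by auto
          then show ?thesis using S1 S5 by fastforce
        qed
        have "(\<Sum>z\<in>{0..N}. g z1 (z - z1)) = infsum (\<lambda>z. g z1 (z - z1)) UNIV"
        proof (rule infsum_fin[symmetric])
          fix z assume "z \<notin> {0..N}"
          then show "g z1 (z - z1) = 0" using sg[of "z - z1"] z1 lN by force
        qed simp
        also have "\<dots> = infsum (g z1) UNIV" by (rule infsum_shift)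
        also have "\<dots> = (\<Sum>w\<in>{0..N}. g z1 w)"
        proof (rule infsum_fin)
          fix w assume "w \<notin> {0..N}"
          then show "g z1 w = 0" using sg[of w] z1 lN by force
        qed simp
        finally show "pdd p l z1 * (\<Sum>z\<in>{0..N}. g z1 (z - z1)) = pdd p l z1 * (\<Sum>w\<in>{0..N}. g z1 w)" by simp
      qed
      finally show ?thesis using L by simp
    qed
  qed
qed

end

theorem lemma2:
  fixes q :: "int \<Rightarrow> complex" and p :: "int \<Rightarrow> int \<Rightarrow> complex"
  assumes "\<And>l. l < 0 \<Longrightarrow> q l = 0"
    and "\<And>l z. z < 0 \<Longrightarrow> p l z = 0"
    and "L0 p \<ge> 1"
  shows "\<forall>(l::int) (m::nat). qit q p m l = (\<Sum>\<^sub>\<infinity>z\<in>(UNIV::int set). rdd q p (l - z) * alpha p l z (real m))"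
proof (intro allI)
  fix l :: int and m :: nat
  have "qit q p m l = (\<Sum>z\<in>{0..l}. rdd q p (l - z) * AA p l z m)"
    using main[where q=q and p=p and m=m, OF assms(1,2)] by blast
  also have "\<dots> = (\<Sum>\<^sub>\<infinity>z\<in>(UNIV::int set). rdd q p (l - z) * alpha p l z (real m))"
    using R3[where q=q and p=p and l=l and N=l and m=m, OF assms(1,2)] by simp
  finally show "qit q p m l = (\<Sum>\<^sub>\<infinity>z\<in>(UNIV::int set). rdd q p (l - z) * alpha p l z (real m))" .
qed

end
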